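(* Let $G,G'$ be finitely generated groups with neutral elements $o,o'$, equipped with word metrics $d,d'$ coming from Cayley graphs with respect to finite generating sets, let $0<c<\infty$, and equip $G'':=G\times G'$ with the metric $\rho_c((x,x'),(y,y')):=d(x,y)+d'(x',y')/c$ and origin $o'':=(o,o')$. Then the horocompactification of $(G'',\rho_c)$ is identified with $\overline G\times\overline{G'}$: precisely, the set of points of $\overline{G''}$ (viewed as functions on $G''$) is exactly the set of functions $d_{(u,u')}(y,y'):=d_u(y)+d_{u'}(y')/c$ with $u\in\overline G$ and $u'\in\overline{G'}$.
   Context: For a countable set $H$ with origin $o_H$ and a metric $\rho$ all of whose balls are finite: for $x\in H$ let $\rho_x(y):=\rho(x,y)-\rho(x,o_H)$. Identifying $x$ with $\rho_x$, the horocompactification $\overline H$ is the closure of $\{\rho_x: x\in H\}$ in the space of $1$-Lipschitz functions on $H$ vanishing at $o_H$, with pointwise convergence; $\partial H:=\overline H\setminus H$. Elements $u\in\overline G$ are regarded as functions $d_u$ on $G$ (with $d_u=d(u,\cdot)-d(u,o)$ when $u\in G$), and similarly for $G'$ with origin $o'$ and metric $d'$. *)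

theory Defs
  imports "HOL-Analysis.Analysis"
begin

text \<open>Groups are written additively via the (non-commutative) class group_add;
  the neutral element is 0.\<close>

definition generates :: "'a::group_add set \<Rightarrow> bool" where
  "generates S \<longleftrightarrow> (\<forall>g. \<exists>ws. set ws \<subseteq> S \<union> uminus ` S \<and> sum_list ws = g)"

definition word_dist :: "'a::group_add set \<Rightarrow> 'a \<Rightarrow> 'a \<Rightarrow> real" where
  "word_dist S x y = real (LEAST n. \<exists>ws. length ws = n \<and> set ws \<subseteq> S \<union> uminus ` S
                                        \<and> sum_list ws = - x + y)"

definition horofun :: "('a \<Rightarrow> 'a \<Rightarrow> real) \<Rightarrow> 'a \<Rightarrow> 'a \<Rightarrow> 'a \<Rightarrow> real" where
  "horofun \<rho> org x = (\<lambda>y. \<rho> x y - \<rho> x org)"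

text \<open>Horocompactification: closure of the horofunctions in the topology of pointwise
  convergence (product topology on functions).\<close>
definition horocompactification :: "('a \<Rightarrow> 'a \<Rightarrow> real) \<Rightarrow> 'a \<Rightarrow> ('a \<Rightarrow> real) set" where
  "horocompactification \<rho> org = closure (range (horofun \<rho> org))"

end

theory Submission
  imports Defs
begin


lemma haus_fun: "Hausdorff_space (euclidean :: ('x \<Rightarrow> real) topology)"
  by (metis Hausdorff_space_euclidean Hausdorff_space_product_topology euclidean_product_topology)

lemma compact_closed_fun: "compact (K :: ('x \<Rightarrow> real) set) \<Longrightarrow> closed K"
  by (metis closed_closedin compactin_euclidean_iff compactin_imp_closedin haus_fun)

lemma compact_box_fun: "compact (Pi UNIV (\<lambda>y. {- b y .. b y}) :: ('x \<Rightarrow> real) set)"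
proof -
  have "compactin (product_topology (\<lambda>_. euclidean) UNIV) (PiE UNIV (\<lambda>y::'x. {- b y .. (b y::real)}))"
    by (simp add: compactin_PiE)
  then show ?thesis by (simp add: euclidean_product_topology PiE_UNIV_domain)
qed

lemma compact_closure_bounded:
  fixes A :: "('x \<Rightarrow> real) set"
  assumes "\<And>f y. f \<in> A \<Longrightarrow> \<bar>f y\<bar> \<le> b y"
  shows "compact (closure A)"
proof -
  let ?K = "Pi UNIV (\<lambda>y. {- b y .. b y}) :: ('x \<Rightarrow> real) set"
  have "A \<subseteq> ?K" proof
    fix f assume "f \<in> A"
    then have "\<bar>f y\<bar> \<le> b y" for y using assms by blast
    then show "f \<in> ?K" by (simp add: Pi_iff abs_le_iff) (metis minus_le_iff)
  qed
  then have "closure A \<subseteq> ?K"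
    by (simp add: closure_minimal compact_box_fun compact_closed_fun)
  then have "closure A = ?K \<inter> closure A" by blast
  then show ?thesis by (metis compact_Int_closed compact_box_fun closed_closure)
qed

lemma word_dist_triangle:
  assumes "generates S"
  shows "word_dist S x z \<le> word_dist S x y + word_dist S y z"
proof -
  let ?T = "S \<union> uminus ` S"
  let ?P = "\<lambda>a n. \<exists>ws. length ws = n \<and> set ws \<subseteq> ?T \<and> sum_list ws = a"
  have ex: "\<exists>n. ?P a n" for a using assms unfolding generates_def by blast
  have L: "?P a (LEAST n. ?P a n)" for a by (rule LeastI_ex) (rule ex)
  obtain w1 where w1: "length w1 = (LEAST n. ?P (-x+y) n)" "set w1 \<subseteq> ?T" "sum_list w1 = -x+y"
    using L[of "-x+y"] by blast
  obtain w2 where w2: "length w2 = (LEAST n. ?P (-y+z) n)" "set w2 \<subseteq> ?T" "sum_list w2 = -y+z"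
    using L[of "-y+z"] by blast
  have "sum_list (w1 @ w2) = -x+z" using w1 w2 by (simp add: add.assoc[symmetric])
  then have "?P (-x+z) (length w1 + length w2)" using w1 w2 by (intro exI[of _ "w1@w2"]) auto
  then have "(LEAST n. ?P (-x+z) n) \<le> length w1 + length w2" by (rule Least_le)
  then show ?thesis using w1 w2 unfolding word_dist_def by simp
qed

lemma horo_bound:
  assumes "generates S"
  shows "\<bar>horofun (word_dist S) 0 x y\<bar> \<le> word_dist S 0 y + word_dist S y 0"
  using word_dist_triangle[OF assms, of x 0 y] word_dist_triangle[OF assms, of x y 0]
  unfolding horofun_def
  using word_dist_def[of S y 0] word_dist_def[of S 0 y] by (simp only: abs_le_iff) linarith

lemma compact_horo:
  assumes "generates S"
  shows "compact (horocompactification (word_dist S) 0)"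
  unfolding horocompactification_def
  by (rule compact_closure_bounded[where b = "\<lambda>y. word_dist S 0 y + word_dist S y 0"])
     (auto intro: horo_bound[OF assms])


theorem lemma2p2:
  fixes S :: "'a::group_add set" and S' :: "'b::group_add set" and c :: real
  assumes "finite S" "generates S" "finite S'" "generates S'" "0 < c"
  shows "horocompactification
           (\<lambda>p q. word_dist S (fst p) (fst q) + word_dist S' (snd p) (snd q) / c) (0, 0)
         = {(\<lambda>(y, y'). u y + u' y' / c) | u u'.
              u \<in> horocompactification (word_dist S) 0 \<and>
              u' \<in> horocompactification (word_dist S') 0}"
proof -
  define H :: "('a \<Rightarrow> real) \<times> ('b \<Rightarrow> real) \<Rightarrow> ('a \<times> 'b \<Rightarrow> real)"
    where "H = (\<lambda>(u,u'). (\<lambda>(y, y'). u y + u' y' / c))"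
  define A where "A = range (horofun (word_dist S) 0)"
  define B where "B = range (horofun (word_dist S') 0)"
  have 1: "range (horofun (\<lambda>p q. word_dist S (fst p) (fst q) + word_dist S' (snd p) (snd q) / c) (0, 0))
     = H ` (A \<times> B)"
  proof -
    have "horofun (\<lambda>p q. word_dist S (fst p) (fst q) + word_dist S' (snd p) (snd q) / c) (0, 0) (x, x')
       = H (horofun (word_dist S) 0 x, horofun (word_dist S') 0 x')" for x x'
      unfolding H_def horofun_def by (simp add: fun_eq_iff diff_divide_distrib)
    note eq = this
    show ?thesis
    proof (intro equalityI subsetI)
      fix z assume "z \<in> range (horofun (\<lambda>p q. word_dist S (fst p) (fst q) + word_dist S' (snd p) (snd q) / c) (0, 0))"
      then obtain x x' where z: "z = horofun (\<lambda>p q. word_dist S (fst p) (fst q) + word_dist S' (snd p) (snd q) / c) (0, 0) (x, x')"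
        by auto
      show "z \<in> H ` (A \<times> B)" unfolding z eq A_def B_def by (intro imageI) auto
    next
      fix z assume "z \<in> H ` (A \<times> B)"
      then obtain x x' where z: "z = H (horofun (word_dist S) 0 x, horofun (word_dist S') 0 x')"
        unfolding A_def B_def by auto
      show "z \<in> range (horofun (\<lambda>p q. word_dist S (fst p) (fst q) + word_dist S' (snd p) (snd q) / c) (0, 0))"
        unfolding z eq[symmetric] by (rule rangeI)
    qed
  qed
  have 2: "{(\<lambda>(y, y'). u y + u' y' / c) | u u'.
              u \<in> horocompactification (word_dist S) 0 \<and>
              u' \<in> horocompactification (word_dist S') 0} = H ` (closure A \<times> closure B)"
  proof (intro equalityI subsetI)
    fix z assume "z \<in> {(\<lambda>(y, y'). u y + u' y' / c) | u u'.
              u \<in> horocompactification (word_dist S) 0 \<and>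
              u' \<in> horocompactification (word_dist S') 0}"
    then obtain u u' where z: "z = (\<lambda>(y, y'). u y + u' y' / c)" and
      u: "u \<in> closure A" "u' \<in> closure B"
      unfolding A_def B_def horocompactification_def by blast
    have "z = H (u, u')" unfolding z H_def by simp
    then show "z \<in> H ` (closure A \<times> closure B)" using u by blast
  next
    fix z assume "z \<in> H ` (closure A \<times> closure B)"
    then obtain u u' where z: "z = H (u, u')" and u: "u \<in> closure A" "u' \<in> closure B" by blast
    have "z = (\<lambda>(y, y'). u y + u' y' / c)" unfolding z H_def by simp
    then show "z \<in> {(\<lambda>(y, y'). u y + u' y' / c) | u u'.
              u \<in> horocompactification (word_dist S) 0 \<and>
              u' \<in> horocompactification (word_dist S') 0}"
      using u unfolding A_def B_def horocompactification_def by blast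
  qed
  have c1: "continuous_on X (\<lambda>x::('a \<Rightarrow> real) \<times> ('b \<Rightarrow> real). fst x y)" for X y
    by (rule continuous_on_compose2[OF continuous_on_product_coordinates continuous_on_fst[OF continuous_on_id]]) auto
  have c2: "continuous_on X (\<lambda>x::('a \<Rightarrow> real) \<times> ('b \<Rightarrow> real). snd x y)" for X y
    by (rule continuous_on_compose2[OF continuous_on_product_coordinates continuous_on_snd[OF continuous_on_id]]) auto
  have cont: "continuous_on X H" for X
  proof (rule continuous_on_coordinatewise_then_product)
    fix p :: "'a \<times> 'b"
    obtain y y' where p: "p = (y, y')" by fastforce
    have "(\<lambda>x. H x p) = (\<lambda>x. fst x y + snd x y' / c)"
      unfolding H_def p by (auto simp: fun_eq_iff)
    moreover have "continuous_on X (\<lambda>x::('a \<Rightarrow> real) \<times> ('b \<Rightarrow> real). fst x y + snd x y' / c)"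
      by (intro continuous_on_add continuous_on_divide c1 c2 continuous_on_const) (use assms(5) in auto)
    ultimately show "continuous_on X (\<lambda>x. H x p)" by (simp only:)
  qed
  have cpt: "compact (closure A \<times> closure B)"
    using compact_horo[OF assms(2)] compact_horo[OF assms(4)]
    unfolding A_def B_def horocompactification_def by (rule compact_Times)
  have "closure (H ` (A \<times> B)) = H ` (closure A \<times> closure B)"
  proof
    show "closure (H ` (A \<times> B)) \<subseteq> H ` (closure A \<times> closure B)"
    proof (rule closure_minimal)
      show "H ` (A \<times> B) \<subseteq> H ` (closure A \<times> closure B)"
        by (intro image_mono Sigma_mono closure_subset)
      show "closed (H ` (closure A \<times> closure B))"
        by (rule compact_closed_fun, rule compact_continuous_image[OF cont cpt])
    qed
    show "H ` (closure A \<times> closure B) \<subseteq> closure (H ` (A \<times> B))"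
      unfolding closure_Times[symmetric]
      by (rule image_closure_subset[OF cont closed_closure closure_subset])
  qed
  moreover have "horocompactification
           (\<lambda>p q. word_dist S (fst p) (fst q) + word_dist S' (snd p) (snd q) / c) (0, 0) = closure (H ` (A \<times> B))"
    by (simp only: horocompactification_def 1)
  ultimately show ?thesis unfolding 2 by (metis)
qed

end
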